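(* Let $h:\mathbb{R}\to\mathbb{R}$ be of class $C^1$, let $x_0\in\mathbb{R}$, and let $\Phi$ be a positive function of class $C^2$ on an interval $]x_-,x_+[$ with $x_-<x_0<x_+$, such that $h(x)\neq\Phi^2(x)$ on $]x_-,x_+[$. Define $u_{\mathtt{top}},u_{\mathtt{bot}}$ as in the context, and \[ \Theta_{\mathtt{top}}(x)=\frac{u'_{\mathtt{top}}(x)}{u_{\mathtt{top}}(x)}=\Phi(x)\frac{\Phi'(x)-\sqrt{\left[h(x)-\Phi^{2}(x)\right]^{2}+\left[\Phi'(x)\right]^{2}}}{h(x)-\Phi^{2}(x)},\quad \Theta_{\mathtt{bot}}(x)=\frac{u'_{\mathtt{bot}}(x)}{u_{\mathtt{bot}}(x)}=\Phi(x)\frac{\Phi'(x)+\sqrt{\left[h(x)-\Phi^{2}(x)\right]^{2}+\left[\Phi'(x)\right]^{2}}}{h(x)-\Phi^{2}(x)}. \] Then $\Theta_{\mathtt{top}}$ and $\Theta_{\mathtt{bot}}$ are two distinct solutions of the Riccati equation $\Theta'(x)+\Theta^2(x)+h(x)=0$ on $]x_-,x_+[$ if and only if $\Phi$ satisfies on $]x_-,x_+[$ \[ \Phi''(x)=\frac{3\Phi^{2}(x)+h(x)}{\Phi^{2}(x)-h(x)}\frac{\left[\Phi'(x)\right]^{2}}{\Phi(x)}-\frac{h'(x)\Phi'(x)}{\Phi^{2}(x)-h(x)}+\frac{\Phi^{4}(x)-h^{2}(x)}{\Phi(x)}. \] Moreover, these relations can be uniquely inverted: \[ \Phi(x)=\sqrt{-\frac{u'_{\mathtt{top}}(x)u'_{\mathtt{bot}}(x)}{u_{\mathtt{top}}(x)u_{\mathtt{bot}}(x)}}=\sqrt{-\Theta_{\mathtt{top}}(x)\Theta_{\mathtt{bot}}(x)}.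 \]
   Context: For $x\in]x_-,x_+[$, $u_{\mathtt{top}}(x)=\exp\left[\int_{x_0}^{x}\Theta_{\mathtt{top}}(\xi)\,d\xi\right]$ and $u_{\mathtt{bot}}(x)=\exp\left[\int_{x_0}^{x}\Theta_{\mathtt{bot}}(\xi)\,d\xi\right]$ with $\Theta_{\mathtt{top}},\Theta_{\mathtt{bot}}$ given by the displayed formulas. The ODE for $\Phi$ is the geodesic equation in explicit form for the metric $g_h=\left[(h(x)-\varPhi^2)^2dx^2+d\varPhi^2\right]/\varPhi^2$ on the upper half plane $\varPhi>0$. *)

theory Defs
  imports "HOL-Analysis.Analysis"
begin

definition oriented_integral :: "real \<Rightarrow> real \<Rightarrow> (real \<Rightarrow> real) \<Rightarrow> real" where
  "oriented_integral a x f =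
     (if a \<le> x then integral {a..x} f else - integral {x..a} f)"

definition theta_top :: "(real \<Rightarrow> real) \<Rightarrow> (real \<Rightarrow> real) \<Rightarrow> (real \<Rightarrow> real) \<Rightarrow> real \<Rightarrow> real" where
  "theta_top h \<Phi> \<Phi>' x =
     \<Phi> x * (\<Phi>' x - sqrt ((h x - (\<Phi> x)\<^sup>2)\<^sup>2 + (\<Phi>' x)\<^sup>2)) / (h x - (\<Phi> x)\<^sup>2)"

definition theta_bot :: "(real \<Rightarrow> real) \<Rightarrow> (real \<Rightarrow> real) \<Rightarrow> (real \<Rightarrow> real) \<Rightarrow> real \<Rightarrow> real" where
  "theta_bot h \<Phi> \<Phi>' x =
     \<Phi> x * (\<Phi>' x + sqrt ((h x - (\<Phi> x)\<^sup>2)\<^sup>2 + (\<Phi>' x)\<^sup>2)) / (h x - (\<Phi> x)\<^sup>2)"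

definition u_of :: "real \<Rightarrow> (real \<Rightarrow> real) \<Rightarrow> real \<Rightarrow> real" where
  "u_of x0 \<Theta> x = exp (oriented_integral x0 x \<Theta>)"

definition riccati_solution :: "(real \<Rightarrow> real) \<Rightarrow> (real \<Rightarrow> real) \<Rightarrow> real set \<Rightarrow> bool" where
  "riccati_solution h \<Theta> S \<longleftrightarrow>
     (\<forall>x\<in>S. \<exists>D. (\<Theta> has_real_derivative D) (at x) \<and> D + (\<Theta> x)\<^sup>2 + h x = 0)"

end

theory Submission
  imports Defs
begin

lemma deriv_theta:
  fixes h h' \<Phi> \<Phi>' :: "real \<Rightarrow> real" and x sg Q :: real
  assumes hd: "(h has_real_derivative h' x) (at x)"
    and pd: "(\<Phi> has_real_derivative \<Phi>' x) (at x)"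
    and qd: "(\<Phi>' has_real_derivative Q) (at x)"
    and hne: "h x - (\<Phi> x)^2 \<noteq> 0"
  shows "((\<lambda>y. \<Phi> y * (\<Phi>' y + sg * sqrt ((h y - (\<Phi> y)\<^sup>2)\<^sup>2 + (\<Phi>' y)\<^sup>2)) / (h y - (\<Phi> y)\<^sup>2))
     has_real_derivative
     (let F = \<Phi> x; P = \<Phi>' x; H = h x - F^2; Hp = h' x - 2*F*P; R = sqrt (H^2 + P^2);
          Rp = (H*Hp + P*Q)/R
      in (P*(P + sg * R) + F*(Q + sg * Rp))/H - F*(P + sg * R)*Hp/H^2)) (at x)"
proof -
  define F P H Hp R where "F = \<Phi> x" "P = \<Phi>' x" "H = h x - F^2" "Hp = h' x - 2*F*P"
     "R = sqrt (H^2 + P^2)"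
  have Hn: "H \<noteq> 0" using hne F_P_H_Hp_R_def by simp
  have Rpos: "H^2 + P^2 > 0" using Hn by (simp add: add_pos_nonneg)
  have dH: "((\<lambda>y. h y - (\<Phi> y)\<^sup>2) has_real_derivative Hp) (at x)"
    unfolding F_P_H_Hp_R_def
    by (auto intro!: derivative_eq_intros hd pd)
  have dS: "((\<lambda>y. (h y - (\<Phi> y)\<^sup>2)\<^sup>2 + (\<Phi>' y)\<^sup>2) has_real_derivative 2*H*Hp + 2*P*Q) (at x)"
    unfolding F_P_H_Hp_R_def
    by (auto intro!: derivative_eq_intros hd pd qd simp: algebra_simps)
  have dR: "((\<lambda>y. sqrt ((h y - (\<Phi> y)\<^sup>2)\<^sup>2 + (\<Phi>' y)\<^sup>2)) has_real_derivative (H*Hp + P*Q)/R) (at x)"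
  proof -
    have "((\<lambda>y. sqrt ((h y - (\<Phi> y)\<^sup>2)\<^sup>2 + (\<Phi>' y)\<^sup>2)) has_real_derivative (2*H*Hp + 2*P*Q) / (2 * sqrt (H^2 + P^2))) (at x)"
    proof -
      have Rpos': "(h x - (\<Phi> x)\<^sup>2)\<^sup>2 + (\<Phi>' x)\<^sup>2 > 0" using Rpos unfolding F_P_H_Hp_R_def by simp
      show ?thesis
      using DERIV_chain2[OF DERIV_real_sqrt[OF Rpos'] dS] unfolding F_P_H_Hp_R_def by (simp add: field_simps)
    qed
    moreover have "(2*H*Hp + 2*P*Q) / (2 * sqrt (H^2 + P^2)) = (H*Hp + P*Q)/R"
    proof -
      have "2*H*Hp + 2*P*Q = 2*(H*Hp + P*Q)" by (simp add: algebra_simps)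
      then show ?thesis unfolding F_P_H_Hp_R_def(5) by (metis mult_divide_mult_cancel_left_if zero_neq_numeral)
    qed
    ultimately show ?thesis by simp
  qed
  have "((\<lambda>y. \<Phi> y * (\<Phi>' y + sg * sqrt ((h y - (\<Phi> y)\<^sup>2)\<^sup>2 + (\<Phi>' y)\<^sup>2)) / (h y - (\<Phi> y)\<^sup>2))
     has_real_derivative ((P*(P + sg * R) + F*(Q + sg * ((H*Hp + P*Q)/R)))/H - F*(P + sg * R)*Hp/H^2)) (at x)"
  proof -
    have dN: "((\<lambda>y. \<Phi>' y + sg * sqrt ((h y - (\<Phi> y)\<^sup>2)\<^sup>2 + (\<Phi>' y)\<^sup>2)) has_real_derivative Q + sg * ((H*Hp + P*Q)/R)) (at x)"
      by (intro DERIV_add DERIV_cmult qd dR)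
    have dM: "((\<lambda>y. \<Phi> y * (\<Phi>' y + sg * sqrt ((h y - (\<Phi> y)\<^sup>2)\<^sup>2 + (\<Phi>' y)\<^sup>2))) has_real_derivative P*(P + sg * R) + F*(Q + sg * ((H*Hp + P*Q)/R))) (at x)"
      by (rule DERIV_cong[OF DERIV_mult[OF pd dN]]) (simp add: F_P_H_Hp_R_def)
    show ?thesis
      apply (rule DERIV_cong[OF DERIV_divide[OF dM dH hne]])
      using Hn unfolding F_P_H_Hp_R_def(1,2)[symmetric] unfolding F_P_H_Hp_R_def(3)[symmetric] unfolding F_P_H_Hp_R_def(5)[symmetric] by (simp add: field_simps power2_eq_square)
  qed
  then show ?thesis unfolding F_P_H_Hp_R_def Let_def by simp
qed

lemma poly:
  fixes F P Q h hp R sg H :: real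
  assumes R2: "R^2 = H^2+P^2" and s2: "sg^2=1" and HH: "H = h - F^2"
  shows "H*R*P*(P+sg*R) + H*R*F*Q + F * sg*H*(H*(hp-2*F*P) + P*Q) - F*R*(P+sg*R)*(hp-2*F*P) + F^2*R*(P+sg*R)^2 + h*H^2*R
    = F*(R+sg*P)*H*Q + (R+sg*P)*((3*F^2+h)*P^2 - hp*P*F - (F^4-h^2)*H)"
  using assms by algebra

lemma Gl: fixes a D P F hp c :: real assumes "D \<noteq> 0" "F \<noteq> 0"
  shows "a / D * P^2 / F - hp * P / D + c / F = (a*P^2 - hp*P*F + c*D) / (F*D)"
  using assms by (simp add: field_simps)

lemma key:
  fixes F P Q hx hp sg H R :: real
  assumes Fp: "F > 0" and hne: "hx - F^2 \<noteq> 0" and s2: "sg^2 = 1"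
    and H_def: "H = hx - F^2" and R_def: "R = sqrt (H^2 + P^2)"
  shows "(P*(P + sg * R) + F*(Q + sg * ((H*(hp - 2*F*P) + P*Q)/R)))/H - F*(P + sg * R)*(hp - 2*F*P)/H^2
     + (F*(P + sg * R)/H)^2 + hx
   = F*(R + sg * P)/(H*R) * (Q - ((3 * F\<^sup>2 + hx) / (F\<^sup>2 - hx) * P\<^sup>2 / F
                     - hp * P / (F\<^sup>2 - hx)
                     + (F^4 - hx\<^sup>2) / F))"
proof -
  have Hn: "H \<noteq> 0" using hne H_def by simp
  have H2: "F^2 - hx \<noteq> 0" using hne by simp
  have Rpos: "R > 0" unfolding R_def using Hn by (simp add: add_pos_nonneg)
  have R2: "R^2 = H^2 + P^2" unfolding R_def by simp
  have L: "(P*(P + sg * R) + F*(Q + sg * ((H*(hp - 2*F*P) + P*Q)/R)))/H - F*(P + sg * R)*(hp - 2*F*P)/H^2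
     + (F*(P + sg * R)/H)^2 + hx
     = (H*R*P*(P+sg*R) + H*R*F*Q + F * sg*H*(H*(hp-2*F*P) + P*Q) - F*R*(P+sg*R)*(hp-2*F*P) + F^2*R*(P+sg*R)^2 + hx*H^2*R) / (H^2*R)"
    using Hn Rpos by (simp add: field_simps power2_eq_square)
  have G: "((3 * F\<^sup>2 + hx) / (F\<^sup>2 - hx) * P\<^sup>2 / F - hp * P / (F\<^sup>2 - hx) + (F^4 - hx\<^sup>2) / F)
     = ((3*F^2+hx)*P^2 - hp*P*F + (F^4-hx^2)*(F^2-hx)) / (F*(F^2-hx))"
    using Gl[OF H2, of F "3*F^2+hx" P hp "F^4-hx^2"] Fp by simp
  have e: "F^2 - hx = -H" using H_def by simp
  have Rr: "F*(R + sg * P)/(H*R) * (Q - ((3*F^2+hx)*P^2 - hp*P*F + (F^4-hx^2)*(F^2-hx)) / (F*(F^2-hx)))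
     = (F*(R+sg*P)*H*Q + (R+sg*P)*((3*F^2+hx)*P^2 - hp*P*F - (F^4-hx^2)*H)) / (H^2*R)"
    unfolding e using Hn Rpos Fp by (simp add: field_simps power2_eq_square)
  show ?thesis unfolding L G Rr using poly[OF R2 s2 H_def] by simp
qed

lemma oi_deriv:
  fixes \<Theta> :: "real \<Rightarrow> real"
  assumes cont: "continuous_on {xm<..<xp} \<Theta>" and x0: "x0 \<in> {xm<..<xp}" and x: "x \<in> {xm<..<xp}"
  shows "((\<lambda>y. oriented_integral x0 y \<Theta>) has_real_derivative \<Theta> x) (at x)"
proof -
  define a where "a = (xm + min x x0)/2"
  define b where "b = (xp + max x x0)/2"
  have ab: "xm < a" "a < min x x0" "max x x0 < b" "b < xp" using x x0 unfolding a_def b_def by auto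
  have sub: "{a..b} \<subseteq> {xm<..<xp}" using ab by auto
  have cab: "continuous_on {a..b} \<Theta>" using continuous_on_subset[OF cont sub] .
  have intg: "\<And>c d. a \<le> c \<Longrightarrow> d \<le> b \<Longrightarrow> \<Theta> integrable_on {c..d}"
    by (rule integrable_continuous_real, rule continuous_on_subset[OF cab]) auto
  have eq: "integral {a..y} \<Theta> - integral {a..x0} \<Theta> = oriented_integral x0 y \<Theta>" if y: "y \<in> {a<..<b}" for y
  proof (cases "x0 \<le> y")
    case True
    have "integral {a..y} \<Theta> = integral {a..x0} \<Theta> + integral {x0..y} \<Theta>"
      using Henstock_Kurzweil_Integration.integral_combine[where a=a and c=x0 and b=y and f=\<Theta>] True ab y intg[of a y] by auto
    then show ?thesis using True unfolding oriented_integral_def by simp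
  next
    case False
    have "integral {a..x0} \<Theta> = integral {a..y} \<Theta> + integral {y..x0} \<Theta>"
      using Henstock_Kurzweil_Integration.integral_combine[where a=a and c=y and b=x0 and f=\<Theta>] False ab y intg[of a x0] by auto
    then show ?thesis using False unfolding oriented_integral_def by simp
  qed
  have xin: "x \<in> {a..b}" using ab by auto
  have d1: "((\<lambda>y. integral {a..y} \<Theta>) has_real_derivative \<Theta> x) (at x within {a..b})"
    by (rule integral_has_real_derivative[OF cab xin])
  have "at x within {a..b} = at x" by (rule at_within_interior) (use ab in auto)
  with d1 have d2: "((\<lambda>y. integral {a..y} \<Theta> - integral {a..x0} \<Theta>) has_real_derivative \<Theta> x - 0) (at x)"
    by (intro DERIV_diff) auto
  show ?thesis
    by (rule has_field_derivative_transform_within_open[OF d2[simplified], of "{a<..<b}"]) (use ab eq in auto)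
qed
theorem corollary2p11:
  fixes h h' \<Phi> \<Phi>' \<Phi>'' :: "real \<Rightarrow> real" and x0 xm xp :: real
  assumes h_deriv: "\<And>x. (h has_real_derivative h' x) (at x)"
    and h'_cont: "continuous_on UNIV h'"
    and interval: "xm < x0" "x0 < xp"
    and Phi_deriv: "\<And>x. x \<in> {xm<..<xp} \<Longrightarrow> (\<Phi> has_real_derivative \<Phi>' x) (at x)"
    and Phi'_deriv: "\<And>x. x \<in> {xm<..<xp} \<Longrightarrow> (\<Phi>' has_real_derivative \<Phi>'' x) (at x)"
    and Phi''_cont: "continuous_on {xm<..<xp} \<Phi>''"
    and Phi_pos: "\<And>x. x \<in> {xm<..<xp} \<Longrightarrow> \<Phi> x > 0"
    and h_ne: "\<And>x. x \<in> {xm<..<xp} \<Longrightarrow> h x \<noteq> (\<Phi> x)\<^sup>2"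
  shows "((riccati_solution h (theta_top h \<Phi> \<Phi>') {xm<..<xp}
          \<and> riccati_solution h (theta_bot h \<Phi> \<Phi>') {xm<..<xp}
          \<and> (\<forall>x\<in>{xm<..<xp}. theta_top h \<Phi> \<Phi>' x \<noteq> theta_bot h \<Phi> \<Phi>' x))
         \<longleftrightarrow>
         (\<forall>x\<in>{xm<..<xp}.
            \<Phi>'' x = (3 * (\<Phi> x)\<^sup>2 + h x) / ((\<Phi> x)\<^sup>2 - h x) * (\<Phi>' x)\<^sup>2 / \<Phi> x
                     - h' x * \<Phi>' x / ((\<Phi> x)\<^sup>2 - h x)
                     + ((\<Phi> x)^4 - (h x)\<^sup>2) / \<Phi> x))
      \<and> (\<forall>x\<in>{xm<..<xp}.
           theta_top h \<Phi> \<Phi>' x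
             = deriv (u_of x0 (theta_top h \<Phi> \<Phi>')) x / u_of x0 (theta_top h \<Phi> \<Phi>') x
         \<and> theta_bot h \<Phi> \<Phi>' x
             = deriv (u_of x0 (theta_bot h \<Phi> \<Phi>')) x / u_of x0 (theta_bot h \<Phi> \<Phi>') x
         \<and> \<Phi> x = sqrt (- (deriv (u_of x0 (theta_top h \<Phi> \<Phi>')) x
                            * deriv (u_of x0 (theta_bot h \<Phi> \<Phi>')) x)
                         / (u_of x0 (theta_top h \<Phi> \<Phi>') x * u_of x0 (theta_bot h \<Phi> \<Phi>') x))
         \<and> \<Phi> x = sqrt (- (theta_top h \<Phi> \<Phi>' x * theta_bot h \<Phi> \<Phi>' x)))"
  proof -
  define S where "S = {xm<..<xp}"
  define th where "th sg = (\<lambda>y. \<Phi> y * (\<Phi>' y + sg * sqrt ((h y - (\<Phi> y)\<^sup>2)\<^sup>2 + (\<Phi>' y)\<^sup>2)) / (h y - (\<Phi> y)\<^sup>2))" for sg :: real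
  define G where "G x = (3 * (\<Phi> x)\<^sup>2 + h x) / ((\<Phi> x)\<^sup>2 - h x) * (\<Phi>' x)\<^sup>2 / \<Phi> x
                     - h' x * \<Phi>' x / ((\<Phi> x)\<^sup>2 - h x)
                     + ((\<Phi> x)^4 - (h x)\<^sup>2) / \<Phi> x" for x
  define Dth where "Dth sg x = (let F = \<Phi> x; P = \<Phi>' x; H = h x - F^2; Hp = h' x - 2*F*P; R = sqrt (H^2 + P^2);
          Rp = (H*Hp + P*\<Phi>'' x)/R
      in (P*(P + sg * R) + F*(\<Phi>'' x + sg * Rp))/H - F*(P + sg * R)*Hp/H^2)" for sg x
  define c where "c sg x = \<Phi> x * (sqrt ((h x - (\<Phi> x)^2)^2 + (\<Phi>' x)^2) + sg * \<Phi>' x)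
      / ((h x - (\<Phi> x)^2) * sqrt ((h x - (\<Phi> x)^2)^2 + (\<Phi>' x)^2))" for sg x
  have top: "theta_top h \<Phi> \<Phi>' = th (-1)" by (rule ext) (simp add: theta_top_def th_def)
  have bot: "theta_bot h \<Phi> \<Phi>' = th 1" by (rule ext) (simp add: theta_bot_def th_def)
  have Hn: "h x - (\<Phi> x)^2 \<noteq> 0" if "x \<in> S" for x using h_ne that S_def by simp
  have Rgt: "sqrt ((h x - (\<Phi> x)^2)^2 + (\<Phi>' x)^2) > \<bar>\<Phi>' x\<bar>" if "x \<in> S" for x
  proof -
    have "(\<Phi>' x)^2 < (h x - (\<Phi> x)^2)^2 + (\<Phi>' x)^2" using Hn[OF that] by simp
    then have "sqrt ((\<Phi>' x)^2) < sqrt ((h x - (\<Phi> x)^2)^2 + (\<Phi>' x)^2)" by (rule real_sqrt_less_mono)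
    then show ?thesis by simp
  qed
  have dth: "(th sg has_real_derivative Dth sg x) (at x)" if "x \<in> S" for sg x
    unfolding th_def Dth_def
    by (rule deriv_theta[OF h_deriv Phi_deriv Phi'_deriv Hn]) (use that S_def in auto)
  have keyx: "Dth sg x + (th sg x)^2 + h x = c sg x * (\<Phi>'' x - G x)" if "x \<in> S" "sg^2 = 1" for sg x
    unfolding Dth_def th_def c_def G_def Let_def
    by (rule key[OF _ Hn[OF that(1)] that(2) refl refl]) (use that Phi_pos S_def in auto)
  have cnz: "c sg x \<noteq> 0" if "x \<in> S" "sg = 1 \<or> sg = -1" for sg x
  proof -
    have "sqrt ((h x - (\<Phi> x)^2)^2 + (\<Phi>' x)^2) + sg * \<Phi>' x > 0" using Rgt[OF that(1)] that(2) by auto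
    moreover have "sqrt ((h x - (\<Phi> x)^2)^2 + (\<Phi>' x)^2) > 0" using Rgt[OF that(1)] by linarith
    moreover have "\<Phi> x > 0" using Phi_pos that S_def by auto
    ultimately show ?thesis unfolding c_def using Hn[OF that(1)] by simp
  qed
  have ric: "riccati_solution h (th sg) S \<longleftrightarrow> (\<forall>x\<in>S. \<Phi>'' x = G x)" if "sg = 1 \<or> sg = -1" for sg
  proof
    assume r: "riccati_solution h (th sg) S"
    show "\<forall>x\<in>S. \<Phi>'' x = G x"
    proof
      fix x assume xS: "x \<in> S"
      obtain D where D: "(th sg has_real_derivative D) (at x)" "D + (th sg x)^2 + h x = 0"
        using r xS unfolding riccati_solution_def by blast
      have "D = Dth sg x" using DERIV_unique[OF D(1) dth[OF xS]] .
      then have "c sg x * (\<Phi>'' x - G x) = 0" using keyx[OF xS] D(2) that by auto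
      then show "\<Phi>'' x = G x" using cnz[OF xS that] by simp
    qed
  next
    assume g: "\<forall>x\<in>S. \<Phi>'' x = G x"
    show "riccati_solution h (th sg) S" unfolding riccati_solution_def
    proof
      fix x assume xS: "x \<in> S"
      have "Dth sg x + (th sg x)^2 + h x = 0" using keyx[OF xS] g xS that by auto
      then show "\<exists>D. (th sg has_real_derivative D) (at x) \<and> D + (th sg x)\<^sup>2 + h x = 0"
        using dth[OF xS] by blast
    qed
  qed
  have prod: "th (-1) x * th 1 x = -((\<Phi> x)^2)" if "x \<in> S" for x
  proof -
    define H where "H = h x - (\<Phi> x)^2"
    define P where "P = \<Phi>' x"
    define R where "R = sqrt (H^2 + P^2)"
    have R2: "R^2 = H^2 + P^2" unfolding R_def by simp
    have HH: "H \<noteq> 0" using Hn[OF that] H_def by simp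
    have "th (-1) x * th 1 x = (\<Phi> x)^2 * ((P - R) * (P + R)) / H^2"
      unfolding th_def H_def[symmetric] P_def[symmetric] R_def[symmetric]
      by (simp add: power2_eq_square)
    also have "(P - R) * (P + R) = -(H^2)" using R2 by (simp add: algebra_simps power2_eq_square)
    finally show ?thesis using HH by simp
  qed
  have dist: "th (-1) x \<noteq> th 1 x" if "x \<in> S" for x
  proof
    assume eq: "th (-1) x = th 1 x"
    have "th 1 x - th (-1) x = 2 * \<Phi> x * sqrt ((h x - (\<Phi> x)^2)^2 + (\<Phi>' x)^2) / (h x - (\<Phi> x)^2)"
      unfolding th_def by (simp add: diff_divide_distrib[symmetric] algebra_simps)
    moreover have "sqrt ((h x - (\<Phi> x)^2)^2 + (\<Phi>' x)^2) > 0" using Rgt[OF that] by linarith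
    moreover have "\<Phi> x > 0" using Phi_pos that S_def by auto
    ultimately show False using eq Hn[OF that] by simp
  qed
  have cont: "continuous_on S (th sg)" for sg
    unfolding S_def
    by (rule continuous_at_imp_continuous_on, rule ballI, rule DERIV_isCont, rule dth) (auto simp: S_def)
  have x0S: "x0 \<in> S" using interval S_def by auto
  have uder: "(u_of x0 (th sg) has_real_derivative th sg x * u_of x0 (th sg) x) (at x)" if "x \<in> S" for sg x
  proof -
    have "((\<lambda>y. exp (oriented_integral x0 y (th sg))) has_real_derivative exp (oriented_integral x0 x (th sg)) * th sg x) (at x)"
      by (rule DERIV_chain2[OF DERIV_exp oi_deriv[OF cont[unfolded S_def] x0S[unfolded S_def] that[unfolded S_def]]])
    then show ?thesis unfolding u_of_def[abs_def] by (simp add: mult.commute)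
  qed
  have dd: "deriv (u_of x0 (th sg)) x = th sg x * u_of x0 (th sg) x" if "x \<in> S" for sg x
    using DERIV_imp_deriv[OF uder[OF that]] .
  have upos: "u_of x0 (th sg) x > 0" for sg x unfolding u_of_def by simp
  have ratio: "deriv (u_of x0 (th sg)) x / u_of x0 (th sg) x = th sg x" if "x \<in> S" for sg x
    using dd[OF that] upos[of sg x] by simp
  have sq: "\<Phi> x = sqrt (- (th (-1) x * th 1 x))" if "x \<in> S" for x
    using prod[OF that] Phi_pos[of x] that S_def by simp
  have sq2: "- (deriv (u_of x0 (th (-1))) x * deriv (u_of x0 (th 1)) x)
        / (u_of x0 (th (-1)) x * u_of x0 (th 1) x) = - (th (-1) x * th 1 x)" if "x \<in> S" for x
    using dd[OF that, of "-1"] dd[OF that, of 1] upos[of "-1" x] upos[of 1 x] by simp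
  show ?thesis
    unfolding top bot S_def[symmetric] G_def[symmetric]
    using ric[of 1] ric[of "-1"] dist ratio sq sq2 by auto
qed

end
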